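(* Let $k\ge1$ be the cache size, let $\mathcal{A}$ be a conservative or marking paging algorithm and $\mathcal{B}$ any paging algorithm. Then for any access graph $G$, \[\mathrm{Min}^G(\mathcal{B},\mathcal{A})\ge-1+\frac1k\quad\text{and}\quad \mathrm{Max}^G(\mathcal{A},\mathcal{B})\le1-\frac1k.\]
   Context: Paging: a cache holds at most $k$ pages and is initially empty. A request to a page in the cache is a hit; otherwise it is a fault, the page is brought into the cache, evicting a page first if the cache is full. $\mathcal{A}(I)$ is the number of faults of $\mathcal{A}$ on request sequence $I$. $k$-phases: a request sequence is divided recursively: phase 0 is empty, and for $i\ge1$ phase $i$ is a maximal sequence following phase $i-1$ containing at most $k$ distinct pages. An algorithm is conservative if it incurs at most $k$ faults on any consecutive subsequence containing at most $k$ distinct pages. An algorithm is marking if, within any $k$-phase, once a page has been requested in that phase it is not evicted for the rest of that phase. Access graph: a graph $G$ whose vertices are the pages; a request sequence respects $G$ if any two consecutive requests are identical or adjacent in $G$; $L(G)$ is the set of such sequences. Relative interval: $\mathrm{Min}_{\mathcal{A},\mathcal{B}}(n,G)=\min\{\mathcal{A}(I)-\mathcal{B}(I): I\in L(G),|I|=n\}$, $\mathrm{Max}_{\mathcal{A},\mathcal{B}}(n,G)$ analogously with max; $\mathrm{Min}^G(\mathcal{A},\mathcal{B})=\liminf_{n\to\infty}\mathrm{Min}_{\mathcal{A},\mathcal{B}}(n,G)/n$ and $\mathrm{Max}^G(\mathcal{A},\mathcal{B})=\limsup_{n\to\infty}\mathrm{Max}_{\mathcal{A},\mathcal{B}}(n,G)/n$.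 *)

theory Defs
  imports Complex_Main "HOL-Library.Liminf_Limsup" "HOL-Library.Extended_Real"
begin

(* A deterministic online paging algorithm with cache size k is represented by the
   function mapping each history (prefix of requests already served) to the cache
   contents after serving it. *)
definition paging_alg :: "nat \<Rightarrow> ('p list \<Rightarrow> 'p set) \<Rightarrow> bool" where
  "paging_alg k A \<longleftrightarrow> A [] = {} \<and>
     (\<forall>xs r. if r \<in> A xs then A (xs @ [r]) = A xs
             else if card (A xs) < k then A (xs @ [r]) = insert r (A xs)
             else (\<exists>q\<in>A xs. A (xs @ [r]) = insert r (A xs - {q})))"

definition is_fault :: "('p list \<Rightarrow> 'p set) \<Rightarrow> 'p list \<Rightarrow> nat \<Rightarrow> bool" where
  "is_fault A I t \<longleftrightarrow> I ! t \<notin> A (take t I)"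

definition faults :: "('p list \<Rightarrow> 'p set) \<Rightarrow> 'p list \<Rightarrow> nat" where
  "faults A I = card {t. t < length I \<and> is_fault A I t}"

definition segment :: "'p list \<Rightarrow> nat \<Rightarrow> nat \<Rightarrow> 'p list" where
  "segment I i j = drop i (take j I)"

definition conservative :: "nat \<Rightarrow> ('p list \<Rightarrow> 'p set) \<Rightarrow> bool" where
  "conservative k A \<longleftrightarrow>
     (\<forall>I i j. i \<le> j \<and> j \<le> length I \<and> card (set (segment I i j)) \<le> k \<longrightarrow>
        card {t. i \<le> t \<and> t < j \<and> is_fault A I t} \<le> k)"

definition phase_end :: "nat \<Rightarrow> 'p list \<Rightarrow> nat \<Rightarrow> nat" where
  "phase_end k I s = (GREATEST e. s \<le> e \<and> e \<le> length I \<and> card (set (segment I s e)) \<le> k)"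

(* the k-phases of I, as half-open position intervals [s,e) *)
inductive k_phase :: "nat \<Rightarrow> 'p list \<Rightarrow> nat \<Rightarrow> nat \<Rightarrow> bool" for k I where
  first: "0 < length I \<Longrightarrow> k_phase k I 0 (phase_end k I 0)"
| step: "k_phase k I s e \<Longrightarrow> e < length I \<Longrightarrow> k_phase k I e (phase_end k I e)"

definition marking :: "nat \<Rightarrow> ('p list \<Rightarrow> 'p set) \<Rightarrow> bool" where
  "marking k A \<longleftrightarrow>
     (\<forall>I s e i t. k_phase k I s e \<and> s \<le> i \<and> i \<le> t \<and> t < e \<longrightarrow>
        I ! i \<in> A (take (Suc t) I))"

definition access_graph :: "'p set \<Rightarrow> ('p \<times> 'p) set \<Rightarrow> bool" where
  "access_graph V E \<longleftrightarrow> V \<noteq> {} \<and> E \<subseteq> V \<times> V \<and> sym E"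

definition respects_graph :: "'p set \<Rightarrow> ('p \<times> 'p) set \<Rightarrow> 'p list \<Rightarrow> bool" where
  "respects_graph V E I \<longleftrightarrow> set I \<subseteq> V \<and>
     (\<forall>i. Suc i < length I \<longrightarrow> I ! i = I ! Suc i \<or> (I ! i, I ! Suc i) \<in> E)"

definition MinD :: "('p list \<Rightarrow> 'p set) \<Rightarrow> ('p list \<Rightarrow> 'p set) \<Rightarrow> nat \<Rightarrow> 'p set \<Rightarrow> ('p \<times> 'p) set \<Rightarrow> real" where
  "MinD A B n V E = Inf ((\<lambda>I. real (faults A I) - real (faults B I)) ` {I. respects_graph V E I \<and> length I = n})"

definition MaxD :: "('p list \<Rightarrow> 'p set) \<Rightarrow> ('p list \<Rightarrow> 'p set) \<Rightarrow> nat \<Rightarrow> 'p set \<Rightarrow> ('p \<times> 'p) set \<Rightarrow> real" where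
  "MaxD A B n V E = Sup ((\<lambda>I. real (faults A I) - real (faults B I)) ` {I. respects_graph V E I \<and> length I = n})"

definition MinG :: "'p set \<Rightarrow> ('p \<times> 'p) set \<Rightarrow> ('p list \<Rightarrow> 'p set) \<Rightarrow> ('p list \<Rightarrow> 'p set) \<Rightarrow> ereal" where
  "MinG V E A B = liminf (\<lambda>n. ereal (MinD A B n V E / real n))"

definition MaxG :: "'p set \<Rightarrow> ('p \<times> 'p) set \<Rightarrow> ('p list \<Rightarrow> 'p set) \<Rightarrow> ('p list \<Rightarrow> 'p set) \<Rightarrow> ereal" where
  "MaxG V E A B = limsup (\<lambda>n. ereal (MaxD A B n V E / real n))"

end

theory Submission
  imports Defs
begin

definition cnt :: "('p list \<Rightarrow> 'p set) \<Rightarrow> 'p list \<Rightarrow> nat \<Rightarrow> nat \<Rightarrow> nat" where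
  "cnt A I a b = card {t. a \<le> t \<and> t < b \<and> is_fault A I t}"

lemma cnt_add: "a \<le> b \<Longrightarrow> b \<le> c \<Longrightarrow> cnt A I a c = cnt A I a b + cnt A I b c"
proof -
  assume h: "a \<le> b" "b \<le> c"
  have "{t. a \<le> t \<and> t < c \<and> is_fault A I t} =
        {t. a \<le> t \<and> t < b \<and> is_fault A I t} \<union> {t. b \<le> t \<and> t < c \<and> is_fault A I t}"
    using h by auto
  moreover have "finite {t. a \<le> t \<and> t < b \<and> is_fault A I t}"
    by (rule finite_subset[of _ "{..<b}"]) auto
  moreover have "finite {t. b \<le> t \<and> t < c \<and> is_fault A I t}"
    by (rule finite_subset[of _ "{..<c}"]) auto
  moreover have "{t. a \<le> t \<and> t < b \<and> is_fault A I t} \<inter> {t. b \<le> t \<and> t < c \<and> is_fault A I t} = {}"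
    by auto
  ultimately show ?thesis unfolding cnt_def
    by (simp add: card_Un_disjoint)
qed

lemma faults_cnt: "faults A I = cnt A I 0 (length I)"
  unfolding faults_def cnt_def by simp

lemma length_segment: "e \<le> length I \<Longrightarrow> length (segment I s e) = e - s"
  unfolding segment_def by simp

lemma nth_segment: "e \<le> length I \<Longrightarrow> i < e - s \<Longrightarrow> segment I s e ! i = I ! (s + i)"
  unfolding segment_def by simp

lemma set_segment: "e \<le> length I \<Longrightarrow> set (segment I s e) = (\<lambda>t. I ! t) ` {s..<e}"
proof -
  assume e: "e \<le> length I"
  show ?thesis
  proof
    show "set (segment I s e) \<subseteq> (\<lambda>t. I ! t) ` {s..<e}"
    proof
      fix x assume "x \<in> set (segment I s e)"
      then obtain i where i: "i < length (segment I s e)" "x = segment I s e ! i"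
        by (metis in_set_conv_nth)
      then have "i < e - s" using e length_segment by metis
      then have "x = I ! (s + i)" "s + i \<in> {s..<e}" using i e nth_segment by auto
      then show "x \<in> (\<lambda>t. I ! t) ` {s..<e}" by blast
    qed
    show "(\<lambda>t. I ! t) ` {s..<e} \<subseteq> set (segment I s e)"
    proof
      fix x assume "x \<in> (\<lambda>t. I ! t) ` {s..<e}"
      then obtain t where t: "s \<le> t" "t < e" "x = I ! t" by auto
      then have "t - s < e - s" by simp
      then have "segment I s e ! (t - s) = x" using nth_segment[OF e] t by simp
      moreover have "t - s < length (segment I s e)" using length_segment[OF e] t by simp
      ultimately show "x \<in> set (segment I s e)" by (metis nth_mem)
    qed
  qed
qed

lemma cache_inv: "paging_alg k B \<Longrightarrow> finite (B xs) \<and> card (B xs) \<le> k"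
proof (induction xs rule: rev_induct)
  case Nil then show ?case by (simp add: paging_alg_def)
next
  case (snoc r xs)
  have H: "if r \<in> B xs then B (xs @ [r]) = B xs
             else if card (B xs) < k then B (xs @ [r]) = insert r (B xs)
             else (\<exists>q\<in>B xs. B (xs @ [r]) = insert r (B xs - {q}))"
    using snoc.prems unfolding paging_alg_def by blast
  show ?case
  proof (cases "r \<in> B xs")
    case True then show ?thesis using H snoc by simp
  next
    case False
    show ?thesis
    proof (cases "card (B xs) < k")
      case True then show ?thesis using H False snoc by (simp add: card_insert_if)
    next
      case F2: False
      then obtain q where q: "q \<in> B xs" "B (xs @ [r]) = insert r (B xs - {q})"
        using H False by auto
      have "card (B xs) \<ge> 1" using q(1) snoc by (metis card_0_eq empty_iff less_one not_less)
      then show ?thesis using q snoc False by (simp add: card_insert_if)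
    qed
  qed
qed

lemma cache_req: "paging_alg k B \<Longrightarrow> r \<in> B (xs @ [r])"
  unfolding paging_alg_def by (metis insertI1)

lemma cache_hit: "paging_alg k B \<Longrightarrow> r \<in> B xs \<Longrightarrow> B (xs @ [r]) = B xs"
  unfolding paging_alg_def by metis

lemma phase_end_props:
  assumes k: "k \<ge> 1" and s: "s < length I"
  shows "s < phase_end k I s" "phase_end k I s \<le> length I"
    "card (set (segment I s (phase_end k I s))) \<le> k"
    "phase_end k I s < length I \<Longrightarrow> card (set (segment I s (phase_end k I s))) = k
        \<and> I ! phase_end k I s \<notin> set (segment I s (phase_end k I s))"
proof -
  let ?P = "\<lambda>e. s \<le> e \<and> e \<le> length I \<and> card (set (segment I s e)) \<le> k"
  have seg1: "segment I s (Suc s) = [I ! s]" using s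
    by (simp add: segment_def take_Suc_conv_app_nth)
  have P1: "?P (Suc s)" using s k seg1 by simp
  have bd: "\<And>y. ?P y \<Longrightarrow> y \<le> length I" by simp
  have PG: "?P (phase_end k I s)" unfolding phase_end_def by (rule GreatestI_nat[of ?P "Suc s" "length I", OF P1 bd])
  have "Suc s \<le> phase_end k I s" unfolding phase_end_def by (rule Greatest_le_nat[of ?P "Suc s" "length I", OF P1 bd])
  then show "s < phase_end k I s" by simp
  show "phase_end k I s \<le> length I" "card (set (segment I s (phase_end k I s))) \<le> k" using PG by auto
  assume lt: "phase_end k I s < length I"
  let ?p = "phase_end k I s"
  have "\<not> ?P (Suc ?p)"
  proof
    assume a: "?P (Suc ?p)"
    have peq: "?p = Greatest ?P" unfolding phase_end_def by simp
    have "Suc ?p \<le> Greatest ?P" by (rule Greatest_le_nat[of ?P "Suc ?p" "length I", OF a bd])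
    then show False using peq by simp
  qed
  then have gt: "card (set (segment I s (Suc ?p))) > k" using lt PG by auto
  have "segment I s (Suc ?p) = segment I s ?p @ [I ! ?p]"
    using lt PG by (simp add: segment_def take_Suc_conv_app_nth)
  then have "set (segment I s (Suc ?p)) = insert (I ! ?p) (set (segment I s ?p))" by simp
  then show "card (set (segment I s ?p)) = k \<and> I ! ?p \<notin> set (segment I s ?p)"
    using gt PG by (auto simp: card_insert_if split: if_splits)
qed


fun pst :: "nat \<Rightarrow> 'p list \<Rightarrow> nat \<Rightarrow> nat" where
  "pst k I 0 = 0"
| "pst k I (Suc j) = (if pst k I j < length I then phase_end k I (pst k I j) else pst k I j)"

lemma pst_prev: "pst k I (Suc j) < length I \<Longrightarrow> pst k I j < length I"
  by (simp split: if_splits)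

lemma pst_le: "k \<ge> 1 \<Longrightarrow> pst k I j \<le> length I"
  by (induction j) (auto simp: phase_end_props(2))

lemma pst_kphase: "0 < length I \<Longrightarrow> pst k I j < length I \<Longrightarrow> k_phase k I (pst k I j) (pst k I (Suc j))"
proof (induction j)
  case 0 then show ?case by (simp add: k_phase.first)
next
  case (Suc j)
  have "pst k I j < length I" using pst_prev Suc.prems by blast
  then have "k_phase k I (pst k I j) (pst k I (Suc j))" using Suc by blast
  from k_phase.step[OF this Suc.prems(2)] show ?case using Suc.prems by simp
qed

lemma pst_len: "k \<ge> 1 \<Longrightarrow> pst k I j < length I \<Longrightarrow> k * j \<le> pst k I j"
proof (induction j)
  case 0 then show ?case by simp
next
  case (Suc j)
  have lt: "pst k I j < length I" using pst_prev Suc.prems by blast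
  let ?s = "pst k I j" let ?e = "phase_end k I ?s"
  have e: "pst k I (Suc j) = ?e" using lt by simp
  have "card (set (segment I ?s ?e)) = k" using phase_end_props(4)[OF Suc.prems(1) lt] Suc.prems e by simp
  moreover have "card (set (segment I ?s ?e)) \<le> length (segment I ?s ?e)" by (rule card_length)
  moreover have "length (segment I ?s ?e) = ?e - ?s"
    using length_segment phase_end_props(2)[OF Suc.prems(1) lt] by blast
  ultimately have "k \<le> ?e - ?s" by simp
  moreover have "k * j \<le> ?s" using Suc lt by blast
  moreover have "?s < ?e" using phase_end_props(1)[OF Suc.prems(1) lt] .
  ultimately show ?case using e by simp
qed

lemma phase_faults:
  assumes k: "k \<ge> 1" and A: "conservative k A \<or> marking k A" and s: "s < length I"
    and kp: "k_phase k I s (phase_end k I s)"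
  shows "cnt A I s (phase_end k I s) \<le> k"
proof -
  let ?e = "phase_end k I s"
  have e: "s \<le> ?e" "?e \<le> length I" "card (set (segment I s ?e)) \<le> k"
    using phase_end_props[OF k s] by auto
  show ?thesis
  proof (cases "conservative k A")
    case True then show ?thesis using e unfolding conservative_def cnt_def by blast
  next
    case False
    then have M: "marking k A" using A by blast
    let ?F = "{t. s \<le> t \<and> t < ?e \<and> is_fault A I t}"
    have mk: "I ! a \<in> A (take b I)" if a: "a \<in> ?F" and b: "b \<in> ?F" and ab: "a < b" for a b
    proof -
      from M have "k_phase k I s ?e \<and> s \<le> a \<and> a \<le> b - 1 \<and> b - 1 < ?e \<longrightarrow> I ! a \<in> A (take (Suc (b - 1)) I)"
        unfolding marking_def by blast
      then have "I ! a \<in> A (take (Suc (b - 1)) I)" using kp a b ab by auto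
      moreover have "Suc (b - 1) = b" using ab by simp
      ultimately show ?thesis by simp
    qed
    have inj: "inj_on (\<lambda>t. I ! t) ?F"
    proof (rule inj_onI)
      fix x y assume x: "x \<in> ?F" and y: "y \<in> ?F" and eq: "I ! x = I ! y"
      show "x = y"
      proof (rule ccontr)
        assume "x \<noteq> y"
        then consider "x < y" | "y < x" by linarith
        then show False
        proof cases
          case 1
          then show False using mk[OF x y 1] y eq unfolding is_fault_def by simp
        next
          case 2
          then show False using mk[OF y x 2] x eq unfolding is_fault_def by simp
        qed
      qed
    qed
    have sub: "(\<lambda>t. I ! t) ` ?F \<subseteq> set (segment I s ?e)"
      using set_segment[OF e(2)] by auto
    have "cnt A I s ?e = card ((\<lambda>t. I ! t) ` ?F)" unfolding cnt_def using card_image[OF inj] by simp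
    also have "\<dots> \<le> card (set (segment I s ?e))" by (rule card_mono[OF _ sub]) simp
    finally show ?thesis using e by simp
  qed
qed


lemma cntA_total:
  assumes k: "k \<ge> 1" and A: "conservative k A \<or> marking k A" and n: "0 < length I"
  shows "cnt A I 0 (pst k I j) \<le> k * j"
proof (induction j)
  case 0 then show ?case by (simp add: cnt_def)
next
  case (Suc j)
  show ?case
  proof (cases "pst k I j < length I")
    case True
    let ?s = "pst k I j"
    have e: "pst k I (Suc j) = phase_end k I ?s" using True by simp
    have kp: "k_phase k I ?s (phase_end k I ?s)" using pst_kphase[OF n True] e by simp
    have "cnt A I ?s (phase_end k I ?s) \<le> k" by (rule phase_faults[OF k A True kp])
    moreover have "cnt A I 0 (phase_end k I ?s) = cnt A I 0 ?s + cnt A I ?s (phase_end k I ?s)"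
      using phase_end_props(1)[OF k True] by (intro cnt_add) auto
    ultimately show ?thesis using Suc e by simp
  next
    case False
    then show ?thesis using Suc by simp
  qed
qed

lemma B_window:
  assumes k: "k \<ge> 1" and B: "paging_alg k B" and s: "s < length I"
    and p: "phase_end k I s < length I"
  shows "1 \<le> cnt B I (Suc s) (Suc (phase_end k I s))"
proof (rule ccontr)
  let ?p = "phase_end k I s"
  assume "\<not> 1 \<le> cnt B I (Suc s) (Suc ?p)"
  then have c0: "cnt B I (Suc s) (Suc ?p) = 0" by simp
  have fin: "finite {t. Suc s \<le> t \<and> t < Suc ?p \<and> is_fault B I t}"
    by (rule finite_subset[of _ "{..<Suc ?p}"]) auto
  have nf: "\<not> is_fault B I t" if "Suc s \<le> t" "t < Suc ?p" for t
    using c0 fin that unfolding cnt_def by auto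
  let ?C = "B (take (Suc s) I)"
  have const: "t \<le> Suc ?p \<longrightarrow> B (take t I) = ?C" if "Suc s \<le> t" for t
    using that
  proof (induction t rule: dec_induct)
    case base then show ?case by simp
  next
    case (step t)
    show ?case
    proof
      assume "Suc t \<le> Suc ?p"
      then have tl: "t < length I" "t < Suc ?p" using p by auto
      have "I ! t \<in> B (take t I)" using nf[OF step.hyps(1) tl(2)] unfolding is_fault_def by simp
      then have "B (take t I @ [I ! t]) = B (take t I)" by (rule cache_hit[OF B])
      then show "B (take (Suc t) I) = ?C" using step tl by (simp add: take_Suc_conv_app_nth)
    qed
  qed
  have sub: "set (segment I s (Suc ?p)) \<subseteq> ?C"
  proof
    fix x assume "x \<in> set (segment I s (Suc ?p))"
    then obtain t where t: "s \<le> t" "t < Suc ?p" "x = I ! t" using set_segment[of "Suc ?p" I s] p by auto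
    show "x \<in> ?C"
    proof (cases "t = s")
      case True
      have "I ! s \<in> B (take s I @ [I ! s])" by (rule cache_req[OF B])
      then show ?thesis using True t s by (simp add: take_Suc_conv_app_nth)
    next
      case False
      then have "Suc s \<le> t" using t by simp
      then have "I ! t \<in> B (take t I)" using nf t unfolding is_fault_def by simp
      moreover have "B (take t I) = ?C" using const[OF \<open>Suc s \<le> t\<close>] t by simp
      ultimately show ?thesis using t by simp
    qed
  qed
  have seg: "segment I s (Suc ?p) = segment I s ?p @ [I ! ?p]"
    using p phase_end_props(1)[OF k s] by (simp add: segment_def take_Suc_conv_app_nth)
  have pp: "card (set (segment I s ?p)) = k \<and> I ! ?p \<notin> set (segment I s ?p)"
    using phase_end_props(4)[OF k s p] .
  have "card (set (segment I s (Suc ?p))) = Suc k" using seg pp by simp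
  moreover have "card (set (segment I s (Suc ?p))) \<le> card ?C"
    using card_mono[OF _ sub] cache_inv[OF B] by blast
  moreover have "card ?C \<le> k" using cache_inv[OF B] by blast
  ultimately show False by simp
qed

lemma cntB_total:
  assumes k: "k \<ge> 1" and B: "paging_alg k B"
  shows "pst k I j < length I \<Longrightarrow> j \<le> cnt B I 0 (Suc (pst k I j))"
proof (induction j)
  case 0 then show ?case by simp
next
  case (Suc j)
  have lt: "pst k I j < length I" using pst_prev Suc.prems by blast
  let ?s = "pst k I j"
  have e: "pst k I (Suc j) = phase_end k I ?s" using lt by simp
  have w: "1 \<le> cnt B I (Suc ?s) (Suc (phase_end k I ?s))"
    using B_window[OF k B lt] Suc.prems e by simp
  have "cnt B I 0 (Suc (phase_end k I ?s)) = cnt B I 0 (Suc ?s) + cnt B I (Suc ?s) (Suc (phase_end k I ?s))"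
    using phase_end_props(1)[OF k lt] by (intro cnt_add) auto
  then show ?case using Suc lt w e by simp
qed


lemma diff_bound:
  assumes k: "k \<ge> 1" and A: "conservative k A \<or> marking k A" and B: "paging_alg k B"
  shows "real (faults A I) - real (faults B I) \<le> (1 - 1 / real k) * real (length I) + real k"
proof (cases "length I = 0")
  case True
  then show ?thesis by (simp add: faults_def)
next
  case False
  let ?n = "length I"
  have n: "0 < ?n" using False by simp
  let ?S = "{j. pst k I j < ?n}"
  have Ssub: "?S \<subseteq> {..?n}"
  proof
    fix j assume "j \<in> ?S"
    then have "k * j \<le> pst k I j" "pst k I j < ?n" using pst_len[OF k] by auto
    moreover have "j \<le> k * j" using k by simp
    ultimately show "j \<in> {..?n}" by (simp only: atMost_iff)
  qed
  have finS: "finite ?S" using finite_subset[OF Ssub] by simp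
  have S0: "0 \<in> ?S" using n by simp
  define J where "J = Max ?S"
  have JS: "J \<in> ?S" unfolding J_def using finS S0 Max_in by blast
  have "Suc J \<notin> ?S"
  proof
    assume "Suc J \<in> ?S"
    then have "Suc J \<le> J" unfolding J_def using finS Max_ge by blast
    then show False by simp
  qed
  then have ge: "pst k I (Suc J) \<ge> ?n" by simp
  have lt: "pst k I J < ?n" using JS by simp
  have eqn: "pst k I (Suc J) = ?n" using ge pst_le[OF k, of I "Suc J"] by simp
  have fa: "faults A I \<le> k * Suc J"
    using cntA_total[OF k A n, of "Suc J"] eqn faults_cnt by metis
  have "J \<le> cnt B I 0 (Suc (pst k I J))" by (rule cntB_total[OF k B lt])
  moreover have "cnt B I 0 ?n = cnt B I 0 (Suc (pst k I J)) + cnt B I (Suc (pst k I J)) ?n"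
    using lt by (intro cnt_add) auto
  ultimately have fb: "J \<le> faults B I" using faults_cnt by (metis le_add1 order_trans)
  have kJ: "k * J \<le> ?n" using pst_len[OF k lt] lt by simp
  have kr: "real k \<ge> 1" using k by simp
  have "real (faults A I) - real (faults B I) \<le> real k * (real J + 1) - real J"
  proof -
    have "real (faults A I) \<le> real (k * Suc J)" using fa by (simp only: of_nat_le_iff)
    moreover have "real J \<le> real (faults B I)" using fb by (simp only: of_nat_le_iff)
    moreover have "real (k * Suc J) = real k * (real J + 1)" by (simp add: algebra_simps)
    ultimately show ?thesis by linarith
  qed
  also have "\<dots> = (1 - 1 / real k) * (real k * real J) + real k"
    using kr by (simp add: field_simps)
  also have "\<dots> \<le> (1 - 1 / real k) * real ?n + real k"
  proof -
    have "real k * real J \<le> real ?n" using kJ by (metis of_nat_le_iff of_nat_mult)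
    moreover have "0 \<le> 1 - 1 / real k" using kr by simp
    ultimately show ?thesis by (simp add: mult_left_mono)
  qed
  finally show ?thesis .
qed


theorem proposition1:
  fixes k :: nat and A B :: "'p list \<Rightarrow> 'p set"
    and V :: "'p set" and E :: "('p \<times> 'p) set"
  assumes "k \<ge> 1"
    and "paging_alg k A" and "paging_alg k B"
    and "conservative k A \<or> marking k A"
    and "access_graph V E"
  shows "MinG V E B A \<ge> ereal (-1 + 1 / real k) \<and> MaxG V E A B \<le> ereal (1 - 1 / real k)"
proof -
  note k = assms(1) and Aa = assms(4) and Bb = assms(3)
  define c where "c = 1 - 1 / real k"
  have c0: "0 \<le> c" using k unfolding c_def by simp
  obtain v where v: "v \<in> V" using assms(5) unfolding access_graph_def by blast
  let ?W = "\<lambda>n. {I. respects_graph V E I \<and> length I = n}"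
  have ne: "replicate n v \<in> ?W n" for n
    using v unfolding respects_graph_def by auto
  have db: "real (faults A I) - real (faults B I) \<le> c * real n + real k" if "I \<in> ?W n" for I n
    using diff_bound[OF k Aa Bb, of I] that unfolding c_def by simp
  have maxb: "MaxD A B n V E \<le> c * real n + real k" for n
    unfolding MaxD_def
    by (rule cSup_least) (use ne db in force)+
  have minb: "- (c * real n + real k) \<le> MinD B A n V E" for n
    unfolding MinD_def
    by (rule cInf_greatest) (use ne db in force)+
  have maxd: "MaxD A B n V E / real n \<le> c + real k / real n" for n
  proof (cases "n = 0")
    case True then show ?thesis using c0 by simp
  next
    case False
    then have "MaxD A B n V E / real n \<le> (c * real n + real k) / real n"
      using maxb by (simp add: divide_right_mono)
    also have "\<dots> = c + real k / real n" using False by (simp add: field_simps)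
    finally show ?thesis .
  qed
  have mind: "- c - real k / real n \<le> MinD B A n V E / real n" for n
  proof (cases "n = 0")
    case True then show ?thesis using c0 by simp
  next
    case False
    then have "- (c * real n + real k) / real n \<le> MinD B A n V E / real n"
      using minb by (simp add: divide_right_mono)
    moreover have "- (c * real n + real k) / real n = - c - real k / real n" using False by (simp add: field_simps)
    ultimately show ?thesis by simp
  qed
  have l1: "(\<lambda>n. ereal (c + real k / real n)) \<longlonglongrightarrow> ereal c"
    using tendsto_ereal[OF tendsto_add[OF tendsto_const lim_const_over_n[of "real k"]]] by simp
  have l2: "(\<lambda>n. ereal (- c - real k / real n)) \<longlonglongrightarrow> ereal (- c)"
    using tendsto_ereal[OF tendsto_diff[OF tendsto_const lim_const_over_n[of "real k"]]] by simp
  have "MaxG V E A B \<le> limsup (\<lambda>n. ereal (c + real k / real n))"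
    unfolding MaxG_def by (rule Limsup_mono) (use maxd in auto)
  also have "\<dots> = ereal c" by (rule lim_imp_Limsup[OF _ l1]) simp
  finally have r1: "MaxG V E A B \<le> ereal c" .
  have "ereal (- c) = liminf (\<lambda>n. ereal (- c - real k / real n))"
    by (rule lim_imp_Liminf[OF _ l2, symmetric]) simp
  also have "\<dots> \<le> MinG V E B A"
    unfolding MinG_def by (rule Liminf_mono) (use mind in auto)
  finally have r2: "ereal (- c) \<le> MinG V E B A" .
  have "-1 + 1 / real k = - c" unfolding c_def by simp
  then show ?thesis using r1 r2 unfolding c_def by simp
qed

end
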